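(* Fix bidder $i$, $v_{-i}$ and $\Delta>0$. Let $x^*,x$ be allocation rules such that $k\mapsto x^*_i(z_{i,k},v_{-i})$ and $k\mapsto x_i(z_{i,k},v_{-i})$ are non-decreasing and $|x^*_i(z_{i,j},v_{-i})-x_i(z_{i,j},v_{-i})|\le\Delta$ for all $j$. Let $p^*_i=\sqrt{q^*_i}$ and $p_i=\sqrt{q_i}$ where $q^*_i,q_i$ are given by the payment formula $q_i(z_{i,\ell},v_{-i})=z_{i,\ell}x_i(z_{i,\ell},v_{-i})-\sum_{j=1}^{\ell-1}(z_{i,j+1}-z_{i,j})x_i(z_{i,j},v_{-i})$ (likewise for $x^*$). Then $$\Big|\sum_{k=1}^{K_i}f_{i,k}\big(p^*_i(z_{i,k},v_{-i})-p_i(z_{i,k},v_{-i})\big)\Big|\le\sqrt{2\Delta\,(2z_{i,K_i}-z_{i,1})},$$ in particular it is $O(\sqrt{\Delta})$.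
   Context: Bidder $i$'s type space is $V_i=\{z_{i,1}<\dots<z_{i,K_i}\}\subset[0,\infty)$ with pmf $f_{i,k}$; allocations lie in $[0,1]$. (Under monotonicity the payment-formula values are nonnegative, so the square roots are defined.) *)

theory Defs
  imports "HOL-Analysis.Analysis"
begin

text \<open>Payment formula for a single bidder with v_{-i} fixed. Types indexed 1..K
  by z : nat => real; allocation x : nat => real gives x_i(z_{i,k}, v_{-i}) at index k.
  q(l) = z_l x_l - sum_{j=1}^{l-1} (z_{j+1} - z_j) x_j.\<close>
definition payment :: "(nat \<Rightarrow> real) \<Rightarrow> (nat \<Rightarrow> real) \<Rightarrow> nat \<Rightarrow> real" where
  "payment z x l = z l * x l - (\<Sum>j=1..<l. (z (Suc j) - z j) * x j)"

end

theory Submission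
  imports Defs
begin

lemma tele: "l \<ge> 1 \<Longrightarrow> (\<Sum>j=1..<l. (z (Suc j) - z j)) = z l - (z 1 :: real)"
proof (induction l)
  case 0 then show ?case by simp
next
  case (Suc l)
  show ?case
  proof (cases "l = 0")
    case True then show ?thesis by simp
  next
    case False
    then have "(\<Sum>j=1..<Suc l. (z (Suc j) - z j)) = (\<Sum>j=1..<l. (z (Suc j) - z j)) + (z (Suc l) - z l)"
      by simp
    with Suc False show ?thesis by simp
  qed
qed

lemma sqrt_diff: assumes "a \<ge> 0" "b \<ge> 0" shows "\<bar>sqrt a - sqrt b\<bar> \<le> sqrt \<bar>a - b\<bar>"
proof -
  have *: "sqrt a - sqrt b \<le> sqrt (a - b)" if "0 \<le> b" "b \<le> a" for a b :: real
  proof -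
    have sb: "sqrt b \<le> sqrt a" using that by simp
    have "(sqrt a - sqrt b)^2 = a + b - 2 * sqrt a * sqrt b"
      using that by (simp add: power2_eq_square algebra_simps)
    also have "\<dots> \<le> a - b"
    proof -
      have "sqrt b * sqrt b \<le> sqrt a * sqrt b" by (rule mult_right_mono[OF sb]) (use that in simp)
      moreover have "sqrt b * sqrt b = b" using that by simp
      ultimately show ?thesis by linarith
    qed
    finally have "(sqrt a - sqrt b)^2 \<le> a - b" .
    then show ?thesis using sb real_le_rsqrt by blast
  qed
  show ?thesis
  proof (cases "b \<le> a")
    case True then show ?thesis using *[of b a] assms by simp
  next
    case False then show ?thesis using *[of a b] assms by (simp add: abs_minus_commute)
  qed
qed

theorem mainTheorem15:
  fixes K :: nat and z f xs x :: "nat \<Rightarrow> real" and \<Delta> :: real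
  assumes K: "K \<ge> 1"
    and z_nonneg: "z 1 \<ge> 0"
    and z_strict: "\<And>k. 1 \<le> k \<Longrightarrow> k < K \<Longrightarrow> z k < z (Suc k)"
    and f_nonneg: "\<And>k. 1 \<le> k \<Longrightarrow> k \<le> K \<Longrightarrow> f k \<ge> 0"
    and f_sum: "(\<Sum>k=1..K. f k) = 1"
    and xs_range: "\<And>k. 1 \<le> k \<Longrightarrow> k \<le> K \<Longrightarrow> 0 \<le> xs k \<and> xs k \<le> 1"
    and x_range: "\<And>k. 1 \<le> k \<Longrightarrow> k \<le> K \<Longrightarrow> 0 \<le> x k \<and> x k \<le> 1"
    and xs_mono: "\<And>j k. 1 \<le> j \<Longrightarrow> j \<le> k \<Longrightarrow> k \<le> K \<Longrightarrow> xs j \<le> xs k"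
    and x_mono: "\<And>j k. 1 \<le> j \<Longrightarrow> j \<le> k \<Longrightarrow> k \<le> K \<Longrightarrow> x j \<le> x k"
    and Delta_pos: "\<Delta> > 0"
    and close: "\<And>j. 1 \<le> j \<Longrightarrow> j \<le> K \<Longrightarrow> \<bar>xs j - x j\<bar> \<le> \<Delta>"
  shows "\<bar>\<Sum>k=1..K. f k * (sqrt (payment z xs k) - sqrt (payment z x k))\<bar>
           \<le> sqrt (2 * \<Delta> * (2 * z K - z 1))"
proof -
  have zmono: "z j \<le> z k" if "1 \<le> j" "j \<le> k" "k \<le> K" for j k
    using that
  proof (induction k)
    case 0 then show ?case by simp
  next
    case (Suc k)
    show ?case
    proof (cases "j = Suc k")
      case True then show ?thesis by simp
    next
      case False
      then have "z j \<le> z k" using Suc by simp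
      moreover have "1 \<le> k" using False Suc by simp
      then have "z k < z (Suc k)" using z_strict[of k] Suc by simp
      ultimately show ?thesis by simp
    qed
  qed
  have pnn: "payment z y l \<ge> 0" if "1 \<le> l" "l \<le> K"
    and ym: "\<And>j k. 1 \<le> j \<Longrightarrow> j \<le> k \<Longrightarrow> k \<le> K \<Longrightarrow> y j \<le> y k"
    and yr: "\<And>k. 1 \<le> k \<Longrightarrow> k \<le> K \<Longrightarrow> 0 \<le> y k \<and> y k \<le> 1" for y l
  proof -
    have "(\<Sum>j=1..<l. (z (Suc j) - z j) * y j) \<le> (\<Sum>j=1..<l. (z (Suc j) - z j) * y l)"
    proof (rule sum_mono)
      fix j assume j: "j \<in> {1..<l}"
      have "z j \<le> z (Suc j)" using zmono[of j "Suc j"] j that by simp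
      moreover have "y j \<le> y l" using ym[of j l] j that by simp
      ultimately show "(z (Suc j) - z j) * y j \<le> (z (Suc j) - z j) * y l"
        by (simp add: mult_left_mono)
    qed
    also have "\<dots> = (z l - z 1) * y l" using tele[of l z] that by (simp add: sum_distrib_right[symmetric])
    finally have "(\<Sum>j=1..<l. (z (Suc j) - z j) * y j) \<le> (z l - z 1) * y l" .
    moreover have "0 \<le> z 1 * y l" using z_nonneg yr[of l] that by simp
    ultimately show ?thesis unfolding payment_def by (simp add: algebra_simps)
  qed
  define M where "M = sqrt (\<Delta> * (2 * z K - z 1))"
  have term_bd: "\<bar>sqrt (payment z xs k) - sqrt (payment z x k)\<bar> \<le> M" if k: "1 \<le> k" "k \<le> K" for k
  proof -
    have zk: "0 \<le> z k" "z 1 \<le> z k" "z k \<le> z K" using zmono[of 1 k] zmono[of k K] z_nonneg k by auto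
    have diff: "payment z xs k - payment z x k
        = z k * (xs k - x k) - (\<Sum>j=1..<k. (z (Suc j) - z j) * (xs j - x j))"
    proof -
      have "(\<Sum>j=1..<k. (z (Suc j) - z j) * (xs j - x j)) = (\<Sum>j=1..<k. (z (Suc j) - z j) * xs j) - (\<Sum>j=1..<k. (z (Suc j) - z j) * x j)"
        by (simp add: right_diff_distrib sum_subtractf)
      then show ?thesis unfolding payment_def by (simp add: algebra_simps)
    qed
    have s: "\<bar>\<Sum>j=1..<k. (z (Suc j) - z j) * (xs j - x j)\<bar> \<le> (z k - z 1) * \<Delta>"
    proof -
      have "\<bar>\<Sum>j=1..<k. (z (Suc j) - z j) * (xs j - x j)\<bar> \<le> (\<Sum>j=1..<k. \<bar>(z (Suc j) - z j) * (xs j - x j)\<bar>)"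
        by (rule sum_abs)
      also have "\<dots> \<le> (\<Sum>j=1..<k. (z (Suc j) - z j) * \<Delta>)"
      proof (rule sum_mono)
        fix j assume j: "j \<in> {1..<k}"
        have "z j \<le> z (Suc j)" using zmono[of j "Suc j"] j k by simp
        moreover have "\<bar>xs j - x j\<bar> \<le> \<Delta>" using close[of j] j k by simp
        ultimately show "\<bar>(z (Suc j) - z j) * (xs j - x j)\<bar> \<le> (z (Suc j) - z j) * \<Delta>"
          by (simp add: abs_mult mult_left_mono)
      qed
      also have "\<dots> = (z k - z 1) * \<Delta>" using tele[of k z] k by (simp add: sum_distrib_right[symmetric])
      finally show ?thesis .
    qed
    have a: "\<bar>z k * (xs k - x k)\<bar> \<le> z k * \<Delta>"
      using close[of k] k zk by (simp add: abs_mult mult_left_mono)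
    have "\<bar>payment z xs k - payment z x k\<bar> \<le> z k * \<Delta> + (z k - z 1) * \<Delta>"
      unfolding diff using a s by linarith
    also have "\<dots> \<le> \<Delta> * (2 * z K - z 1)"
      using zk Delta_pos by (simp add: algebra_simps)
    finally have "\<bar>payment z xs k - payment z x k\<bar> \<le> \<Delta> * (2 * z K - z 1)" .
    then have "sqrt \<bar>payment z xs k - payment z x k\<bar> \<le> M" unfolding M_def by simp
    moreover have "\<bar>sqrt (payment z xs k) - sqrt (payment z x k)\<bar> \<le> sqrt \<bar>payment z xs k - payment z x k\<bar>"
      by (rule sqrt_diff; rule pnn; (use k xs_mono xs_range x_mono x_range in auto))
    ultimately show ?thesis by linarith
  qed
  have "\<bar>\<Sum>k=1..K. f k * (sqrt (payment z xs k) - sqrt (payment z x k))\<bar>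
      \<le> (\<Sum>k=1..K. \<bar>f k * (sqrt (payment z xs k) - sqrt (payment z x k))\<bar>)"
    by (rule sum_abs)
  also have "\<dots> \<le> (\<Sum>k=1..K. f k * M)"
  proof (rule sum_mono)
    fix k assume k: "k \<in> {1..K}"
    then show "\<bar>f k * (sqrt (payment z xs k) - sqrt (payment z x k))\<bar> \<le> f k * M"
      using term_bd[of k] f_nonneg[of k] by (simp add: abs_mult mult_left_mono)
  qed
  also have "\<dots> = M" using f_sum by (simp add: sum_distrib_right[symmetric])
  also have "M \<le> sqrt (2 * \<Delta> * (2 * z K - z 1))"
  proof -
    have "z 1 \<le> z K" using zmono[of 1 K] K by simp
    then have "0 \<le> \<Delta> * (2 * z K - z 1)" using Delta_pos z_nonneg by simp
    then show ?thesis unfolding M_def by simp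
  qed
  finally show ?thesis .
qed

end
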